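(* Let $S=\{0,1,\dots,p-1\}$ with $p\ge 2$, let $m\ge 2$, and let $f:S^m\to S$ be a local rule. The global map $\tau$ is injective if and only if there exists neither a pair of replaceable local configurations nor a pair of periodic local configurations for $f$.
   Context: A local configuration is a finite word over $S$. For a word $w=w_1w_2\cdots w_n$ with $n\ge m$, its successor under $f$ is the word $\hat f(w)=u_1\cdots u_{n-m+1}$ with $u_j=f(w_j,w_{j+1},\dots,w_{j+m-1})$. For $k\le n$, $\mathrm{left}_k(w)=w_1\cdots w_k$ and $\mathrm{right}_k(w)=w_{n-k+1}\cdots w_n$. The global map is $\tau:S^{\mathbb Z}\to S^{\mathbb Z}$, $\tau(c)(i)=f(c(i-L),\dots,c(i+R))$ for fixed integers $L,R\ge 0$ with $L+1+R=m$; the CA is (globally) injective if $\tau$ is injective. Two local configurations $\alpha,\beta$ of the same length $n$ are replaceable if: $n\ge 2m-1$; $\alpha\ne\beta$; $\mathrm{left}_{m-1}(\alpha)=\mathrm{left}_{m-1}(\beta)$; $\mathrm{right}_{m-1}(\alpha)=\mathrm{right}_{m-1}(\beta)$; and $\hat f(\alpha)=\hat f(\beta)$. They are periodic if: $n\ge m$; $\alpha\ne\beta$; $\mathrm{left}_{m-1}(\alpha)=\mathrm{right}_{m-1}(\alpha)$; $\mathrm{left}_{m-1}(\beta)=\mathrm{right}_{m-1}(\beta)$; and $\hat f(\alpha)=\hat f(\beta)$. *)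

theory Defs
  imports Main
begin

text \<open>Alphabet S = {0,...,p-1} is {..<p}; words are lists over it; a local rule
  of arity m is a function on lists (only its values on words of length m matter).\<close>

definition word_over :: "nat \<Rightarrow> nat list \<Rightarrow> bool" where
  "word_over p w \<longleftrightarrow> set w \<subseteq> {..<p}"

definition local_rule :: "nat \<Rightarrow> nat \<Rightarrow> (nat list \<Rightarrow> nat) \<Rightarrow> bool" where
  "local_rule p m f \<longleftrightarrow> (\<forall>w. length w = m \<and> word_over p w \<longrightarrow> f w < p)"

definition succ_word :: "(nat list \<Rightarrow> nat) \<Rightarrow> nat \<Rightarrow> nat list \<Rightarrow> nat list" where
  "succ_word f m w = map (\<lambda>j. f (take m (drop j w))) [0..<length w - m + 1]"

definition left_k :: "nat \<Rightarrow> nat list \<Rightarrow> nat list" where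
  "left_k k w = take k w"

definition right_k :: "nat \<Rightarrow> nat list \<Rightarrow> nat list" where
  "right_k k w = drop (length w - k) w"

definition replaceable :: "nat \<Rightarrow> nat \<Rightarrow> (nat list \<Rightarrow> nat) \<Rightarrow> nat list \<Rightarrow> nat list \<Rightarrow> bool" where
  "replaceable p m f \<alpha> \<beta> \<longleftrightarrow>
     word_over p \<alpha> \<and> word_over p \<beta> \<and> length \<alpha> = length \<beta> \<and>
     length \<alpha> \<ge> 2 * m - 1 \<and> \<alpha> \<noteq> \<beta> \<and>
     left_k (m - 1) \<alpha> = left_k (m - 1) \<beta> \<and>
     right_k (m - 1) \<alpha> = right_k (m - 1) \<beta> \<and>
     succ_word f m \<alpha> = succ_word f m \<beta>"

definition periodic_pair :: "nat \<Rightarrow> nat \<Rightarrow> (nat list \<Rightarrow> nat) \<Rightarrow> nat list \<Rightarrow> nat list \<Rightarrow> bool" where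
  "periodic_pair p m f \<alpha> \<beta> \<longleftrightarrow>
     word_over p \<alpha> \<and> word_over p \<beta> \<and> length \<alpha> = length \<beta> \<and>
     length \<alpha> \<ge> m \<and> \<alpha> \<noteq> \<beta> \<and>
     left_k (m - 1) \<alpha> = right_k (m - 1) \<alpha> \<and>
     left_k (m - 1) \<beta> = right_k (m - 1) \<beta> \<and>
     succ_word f m \<alpha> = succ_word f m \<beta>"

definition global_map :: "(nat list \<Rightarrow> nat) \<Rightarrow> nat \<Rightarrow> nat \<Rightarrow> (int \<Rightarrow> nat) \<Rightarrow> (int \<Rightarrow> nat)" where
  "global_map f L R c = (\<lambda>i. f (map (\<lambda>k. c (i - int L + int k)) [0..<L + 1 + R]))"

definition configs :: "nat \<Rightarrow> (int \<Rightarrow> nat) set" where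
  "configs p = {c. \<forall>i. c i < p}"

end

theory Submission
  imports Defs
begin

definition win :: "(int \<Rightarrow> nat) \<Rightarrow> int \<Rightarrow> nat \<Rightarrow> nat list" where
  "win c a n = map (\<lambda>k. c (a + int k)) [0..<n]"

lemma length_win[simp]: "length (win c a n) = n" by (simp add: win_def)
lemma nth_win[simp]: "i < n \<Longrightarrow> win c a n ! i = c (a + int i)" by (simp add: win_def)

lemma take_drop_win: "j + l \<le> n \<Longrightarrow> take l (drop j (win c a n)) = win c (a + int j) l"
  by (rule nth_equalityI) (auto simp: add.assoc)

lemma gm_win: "L + 1 + R = m \<Longrightarrow> global_map f L R c i = f (win c (i - int L) m)"
  unfolding global_map_def win_def by (simp add: algebra_simps)

lemma succ_win: "m \<le> n \<Longrightarrow> succ_word f m (win c a n) = map (\<lambda>j. f (win c (a + int j) m)) [0..<n-m+1]"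
  unfolding succ_word_def length_win
  by (rule map_cong[OF refl]) (simp del: upt_Suc add: take_drop_win)

lemma left_win: "l \<le> n \<Longrightarrow> left_k l (win c a n) = win c a l"
  unfolding left_k_def by (rule nth_equalityI) auto

lemma right_win: "l \<le> n \<Longrightarrow> right_k l (win c a n) = win c (a + int (n-l)) l"
  unfolding right_k_def by (rule nth_equalityI) (auto simp: algebra_simps)

lemma word_over_win: "c \<in> configs p \<Longrightarrow> word_over p (win c a n)"
  by (auto simp: word_over_def configs_def win_def)

lemma succ_nth: "j < length w - m + 1 \<Longrightarrow> succ_word f m w ! j = f (take m (drop j w))"
  by (simp del: upt_Suc add: succ_word_def)

lemma noninj_pairs:
  assumes m2: "m \<ge> 2" and LR: "L + 1 + R = m" and c1: "c1 \<in> configs p" and c2: "c2 \<in> configs p"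
    and eq: "global_map f L R c1 = global_map f L R c2" and ne: "c1 \<noteq> c2"
  shows "(\<exists>\<alpha> \<beta>. replaceable p m f \<alpha> \<beta>) \<or> (\<exists>\<alpha> \<beta>. periodic_pair p m f \<alpha> \<beta>)"
proof -
  have fe: "f (win c1 x m) = f (win c2 x m)" for x
  proof -
    have "global_map f L R c1 (x + int L) = global_map f L R c2 (x + int L)" using eq by simp
    thus ?thesis using gm_win[OF LR] by simp
  qed
  have sw: "succ_word f m (win c1 a n) = succ_word f m (win c2 a n)" if "m \<le> n" for a n
    using that by (simp add: succ_win fe)
  obtain d where d: "c1 d \<noteq> c2 d" using ne by blast
  define N where "N = {j. win c1 j (m-1) \<noteq> win c2 j (m-1)}"
  have memN: "j \<in> N" if "j \<le> d" "d \<le> j + int m - 2" for j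
  proof -
    have k: "nat (d - j) < m - 1" using that m2 by linarith
    have "win c1 j (m-1) ! nat (d - j) \<noteq> win c2 j (m-1) ! nat (d - j)"
      using k d that by simp
    thus ?thesis unfolding N_def by auto
  qed
  show ?thesis
  proof (cases "finite N")
    case False
    define g where "g j = (win c1 j (m-1), win c2 j (m-1))" for j
    have "g ` N \<subseteq> {xs. set xs \<subseteq> {..<p} \<and> length xs = m-1} \<times> {xs. set xs \<subseteq> {..<p} \<and> length xs = m-1}"
      using word_over_win[OF c1] word_over_win[OF c2] by (fastforce simp: g_def word_over_def)
    moreover have "finite ({xs. set xs \<subseteq> {..<p} \<and> length xs = m-1} \<times> {xs. set xs \<subseteq> {..<p} \<and> length xs = m-1})"
      using finite_lists_length_eq[of "{..<p}" "m-1"] by auto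
    ultimately have "finite (g ` N)" using finite_subset by blast
    hence "\<not> inj_on g N" using False finite_imageD by blast
    then obtain j1 j2 where "j1 \<in> N" "j2 \<in> N" "j1 \<noteq> j2" "g j1 = g j2" unfolding inj_on_def by blast
    then obtain j j' where jj: "j < j'" "j \<in> N" "g j = g j'"
      by (metis linorder_neqE)
    define n where "n = nat (j' - j) + (m - 1)"
    have nm: "m \<le> n" using jj m2 unfolding n_def by linarith
    have r: "int (n - (m-1)) = j' - j" unfolding n_def using jj by simp
    have "periodic_pair p m f (win c1 j n) (win c2 j n)"
      unfolding periodic_pair_def
    proof (intro conjI)
      show "win c1 j n \<noteq> win c2 j n"
      proof
        assume "win c1 j n = win c2 j n"
        hence "take (m-1) (win c1 j n) = take (m-1) (win c2 j n)" by simp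
        thus False using jj(2) left_win[of "m-1" n] nm unfolding N_def left_k_def by simp
      qed
      show "left_k (m - 1) (win c1 j n) = right_k (m - 1) (win c1 j n)"
        using left_win[of "m-1" n] right_win[of "m-1" n] nm r jj(3) by (simp add: g_def)
      show "left_k (m - 1) (win c2 j n) = right_k (m - 1) (win c2 j n)"
        using left_win[of "m-1" n] right_win[of "m-1" n] nm r jj(3) by (simp add: g_def)
    qed (use nm word_over_win[OF c1] word_over_win[OF c2] sw in auto)
    thus ?thesis by blast
  next
    case True
    have dN: "d \<in> N" using memN[of d] m2 by simp
    have dN2: "d - int m + 2 \<in> N" using memN[of "d - int m + 2"] m2 by simp
    define a where "a = Min N - 1"
    define b where "b = Max N + 1"
    have aN: "a \<notin> N" using Min_le[OF True] unfolding a_def by fastforce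
    have bN: "b \<notin> N" using Max_ge[OF True] unfolding b_def by fastforce
    have ad: "a \<le> d - int m + 1" using Min_le[OF True dN2] unfolding a_def by simp
    have bd: "d + 1 \<le> b" using Max_ge[OF True dN] unfolding b_def by simp
    define n where "n = nat (b - a) + (m - 1)"
    have nm: "2 * m - 1 \<le> n" using ad bd m2 unfolding n_def by linarith
    have r: "a + int (n - (m-1)) = b" unfolding n_def using ad bd by simp
    have "replaceable p m f (win c1 a n) (win c2 a n)"
      unfolding replaceable_def
    proof (intro conjI)
      have k: "nat (d - a) < n" using ad bd m2 unfolding n_def by linarith
      have "win c1 a n ! nat (d - a) \<noteq> win c2 a n ! nat (d - a)"
        using k d ad m2 by simp
      thus "win c1 a n \<noteq> win c2 a n" by metis
      show "left_k (m - 1) (win c1 a n) = left_k (m - 1) (win c2 a n)"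
        using left_win[of "m-1" n] nm aN unfolding N_def by simp
      show "right_k (m - 1) (win c1 a n) = right_k (m - 1) (win c2 a n)"
        using right_win[of "m-1" n] nm bN r unfolding N_def by simp
    qed (use nm word_over_win[OF c1] word_over_win[OF c2] sw in auto)
    thus ?thesis by blast
  qed
qed

lemma nth_lt: "set xs \<subseteq> {..<p} \<Longrightarrow> j < length xs \<Longrightarrow> xs ! j < p"
  using nth_mem by fastforce

lemma repl_noninj:
  assumes m2: "m \<ge> 2" and LR: "L + 1 + R = m" and p2: "p \<ge> 2" and rep: "replaceable p m f \<alpha> \<beta>"
  shows "\<not> inj_on (global_map f L R) (configs p)"
proof -
  define n where "n = length \<alpha>"
  from rep have wa: "set \<alpha> \<subseteq> {..<p}" and wb: "set \<beta> \<subseteq> {..<p}" and ln: "length \<beta> = n"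
    and nm: "n \<ge> 2*m - 1" and ab: "\<alpha> \<noteq> \<beta>" and lft: "take (m-1) \<alpha> = take (m-1) \<beta>"
    and rgt: "drop (n - (m-1)) \<alpha> = drop (n - (m-1)) \<beta>" and sw: "succ_word f m \<alpha> = succ_word f m \<beta>"
    unfolding replaceable_def word_over_def left_k_def right_k_def n_def by auto
  define c1 where "c1 = (\<lambda>i. if 0 \<le> i \<and> i < int n then \<alpha> ! nat i else 0)"
  define c2 where "c2 = (\<lambda>i. if 0 \<le> i \<and> i < int n then \<beta> ! nat i else 0)"
  have cf1: "c1 \<in> configs p" using wa p2 unfolding configs_def c1_def n_def
    by (auto intro!: nth_lt[OF wa])
  have cf2: "c2 \<in> configs p" using wb p2 ln unfolding configs_def c2_def
    by (auto intro!: nth_lt[OF wb])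
  obtain x where x: "x < n" "\<alpha> ! x \<noteq> \<beta> ! x" using ab ln nth_equalityI unfolding n_def by metis
  have ne: "c1 \<noteq> c2"
  proof
    assume "c1 = c2" hence "c1 (int x) = c2 (int x)" by simp
    thus False using x unfolding c1_def c2_def by simp
  qed
  have eq: "global_map f L R c1 = global_map f L R c2"
  proof
    fix i
    define a where "a = i - int L"
    have "f (win c1 a m) = f (win c2 a m)"
    proof (cases "0 \<le> a \<and> a + int m \<le> int n")
      case True
      have w1: "win c1 a m = take m (drop (nat a) \<alpha>)"
        by (rule nth_equalityI) (use True in \<open>auto simp: c1_def n_def nat_add_distrib\<close>)
      have w2: "win c2 a m = take m (drop (nat a) \<beta>)"
        by (rule nth_equalityI) (use True ln in \<open>auto simp: c2_def nat_add_distrib\<close>)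
      have "nat a < n - m + 1" using True by linarith
      hence "succ_word f m \<alpha> ! nat a = f (take m (drop (nat a) \<alpha>))"
        "succ_word f m \<beta> ! nat a = f (take m (drop (nat a) \<beta>))"
        using succ_nth ln unfolding n_def by auto
      thus ?thesis using w1 w2 sw by simp
    next
      case False
      have "c1 (a + int k) = c2 (a + int k)" if k: "k < m" for k
      proof (cases "0 \<le> a + int k \<and> a + int k < int n")
        case inr: True
        define y where "y = nat (a + int k)"
        have yn: "y < n" using inr unfolding y_def by linarith
        have "\<alpha> ! y = \<beta> ! y"
        proof (cases "a < 0")
          case True
          hence "y < m - 1" using k inr m2 unfolding y_def by linarith
          hence "take (m-1) \<alpha> ! y = \<alpha> ! y" "take (m-1) \<beta> ! y = \<beta> ! y" by auto
          thus ?thesis using lft by metis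
        next
          case f2: False
          hence ge: "n - (m-1) \<le> y" using False k inr m2 unfolding y_def by linarith
          have "drop (n - (m-1)) \<alpha> ! (y - (n - (m-1))) = \<alpha> ! y"
            "drop (n - (m-1)) \<beta> ! (y - (n - (m-1))) = \<beta> ! y"
            using ge yn ln unfolding n_def by auto
          thus ?thesis using rgt by metis
        qed
        thus ?thesis using inr unfolding c1_def c2_def y_def by simp
      next
        case False
        thus ?thesis unfolding c1_def c2_def by auto
      qed
      hence "win c1 a m = win c2 a m" by (intro nth_equalityI) auto
      thus ?thesis by simp
    qed
    thus "global_map f L R c1 i = global_map f L R c2 i" using gm_win[OF LR] a_def by simp
  qed
  show ?thesis using cf1 cf2 ne eq unfolding inj_on_def by blast
qed

lemma per_nth:
  assumes per: "\<And>j. j < n - k \<Longrightarrow> xs ! (k + j) = xs ! j" and k: "k \<ge> 1"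
  shows "x < n \<Longrightarrow> xs ! x = xs ! (x mod k)"
proof (induction x rule: less_induct)
  case (less x)
  show ?case
  proof (cases "x < k")
    case True thus ?thesis by simp
  next
    case False
    have "xs ! x = xs ! (k + (x - k))" using False by simp
    also have "\<dots> = xs ! (x - k)" using per[of "x - k"] less.prems False by simp
    also have "\<dots> = xs ! ((x - k) mod k)" using less.IH[of "x - k"] less.prems False k by simp
    also have "(x - k) mod k = x mod k" using False by (simp add: le_mod_geq)
    finally show ?thesis .
  qed
qed

lemma per_noninj:
  assumes m2: "m \<ge> 2" and LR: "L + 1 + R = m" and p2: "p \<ge> 2" and per: "periodic_pair p m f \<alpha> \<beta>"
  shows "\<not> inj_on (global_map f L R) (configs p)"
proof -
  define n where "n = length \<alpha>"
  define k where "k = n - (m - 1)"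
  from per have wa: "set \<alpha> \<subseteq> {..<p}" and wb: "set \<beta> \<subseteq> {..<p}" and ln: "length \<beta> = n"
    and nm: "n \<ge> m" and ab: "\<alpha> \<noteq> \<beta>" and la: "take (m-1) \<alpha> = drop (n - (m-1)) \<alpha>"
    and lb: "take (m-1) \<beta> = drop (n - (m-1)) \<beta>" and sw: "succ_word f m \<alpha> = succ_word f m \<beta>"
    unfolding periodic_pair_def word_over_def left_k_def right_k_def n_def by auto
  have k1: "k \<ge> 1" and kn: "k \<le> n" and nk: "n - k = m - 1" using nm m2 unfolding k_def by auto
  have pa: "\<alpha> ! (k + j) = \<alpha> ! j" if "j < n - k" for j
  proof -
    have "take (m-1) \<alpha> ! j = \<alpha> ! j" "drop (n - (m-1)) \<alpha> ! j = \<alpha> ! (k + j)"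
      using that nk nm unfolding k_def n_def by auto
    thus ?thesis using la by metis
  qed
  have pb: "\<beta> ! (k + j) = \<beta> ! j" if "j < n - k" for j
  proof -
    have "take (m-1) \<beta> ! j = \<beta> ! j" "drop (n - (m-1)) \<beta> ! j = \<beta> ! (k + j)"
      using that nk nm ln unfolding k_def by auto
    thus ?thesis using lb by metis
  qed
  note Pa = per_nth[of n k \<alpha>, OF pa k1] and Pb = per_nth[of n k \<beta>, OF pb k1]
  define c1 where "c1 = (\<lambda>i. \<alpha> ! nat (i mod int k))"
  define c2 where "c2 = (\<lambda>i. \<beta> ! nat (i mod int k))"
  have nmk: "nat (i mod int k) < k" for i using k1 by (simp add: nat_less_iff)
  have cf1: "c1 \<in> configs p" unfolding configs_def c1_def
    using nmk kn by (auto intro!: nth_lt[OF wa] simp: n_def intro: order.strict_trans2[OF nmk])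
  have cf2: "c2 \<in> configs p" unfolding configs_def c2_def
    using nmk kn ln by (auto intro!: nth_lt[OF wb] intro: order.strict_trans2[OF nmk])
  have modn: "nat (int x mod int k) = x mod k" for x by (simp add: nat_mod_distrib)
  obtain x where x: "x < n" "\<alpha> ! x \<noteq> \<beta> ! x" using ab ln nth_equalityI unfolding n_def by metis
  have ne: "c1 \<noteq> c2"
  proof
    assume "c1 = c2" hence "c1 (int x) = c2 (int x)" by simp
    thus False using x Pa Pb unfolding c1_def c2_def modn by simp
  qed
  have eq: "global_map f L R c1 = global_map f L R c2"
  proof
    fix i
    define a where "a = nat ((i - int L) mod int k)"
    have ak: "a < k" unfolding a_def using nmk .
    have wi: "nat ((i - int L + int j) mod int k) = (a + j) mod k" for j
    proof -
      have "(i - int L + int j) mod int k = (int a + int j) mod int k"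
        unfolding a_def using k1 by (simp add: mod_add_left_eq)
      thus ?thesis by (simp add: nat_mod_distrib flip: of_nat_add)
    qed
    have w1: "win c1 (i - int L) m = take m (drop a \<alpha>)"
    proof (rule nth_equalityI)
      show "length (win c1 (i - int L) m) = length (take m (drop a \<alpha>))" using ak nk kn unfolding n_def by auto
      fix j assume "j < length (win c1 (i - int L) m)"
      hence j: "j < m" by simp
      have "a + j < n" using ak j nk kn by linarith
      thus "win c1 (i - int L) m ! j = take m (drop a \<alpha>) ! j"
        using j Pa[of "a + j"] unfolding c1_def by (simp add: n_def wi)
    qed
    have w2: "win c2 (i - int L) m = take m (drop a \<beta>)"
    proof (rule nth_equalityI)
      show "length (win c2 (i - int L) m) = length (take m (drop a \<beta>))" using ak nk kn ln by auto
      fix j assume "j < length (win c2 (i - int L) m)"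
      hence j: "j < m" by simp
      have "a + j < n" using ak j nk kn by linarith
      thus "win c2 (i - int L) m ! j = take m (drop a \<beta>) ! j"
        using j Pb[of "a + j"] ln unfolding c2_def by (simp add: wi)
    qed
    have "a < n - m + 1" using ak nk kn by linarith
    hence "succ_word f m \<alpha> ! a = f (take m (drop a \<alpha>))"
      "succ_word f m \<beta> ! a = f (take m (drop a \<beta>))"
      using succ_nth ln unfolding n_def by auto
    thus "global_map f L R c1 i = global_map f L R c2 i" using gm_win[OF LR] w1 w2 sw by simp
  qed
  show ?thesis using cf1 cf2 ne eq unfolding inj_on_def by blast
qed

theorem theorem1:
  fixes p m L R :: nat and f :: "nat list \<Rightarrow> nat"
  assumes "p \<ge> 2" and "m \<ge> 2" and "L + 1 + R = m"
    and "local_rule p m f"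
  shows "inj_on (global_map f L R) (configs p) \<longleftrightarrow>
           \<not> (\<exists>\<alpha> \<beta>. replaceable p m f \<alpha> \<beta>) \<and> \<not> (\<exists>\<alpha> \<beta>. periodic_pair p m f \<alpha> \<beta>)"
proof
  assume "inj_on (global_map f L R) (configs p)"
  thus "\<not> (\<exists>\<alpha> \<beta>. replaceable p m f \<alpha> \<beta>) \<and> \<not> (\<exists>\<alpha> \<beta>. periodic_pair p m f \<alpha> \<beta>)"
    using repl_noninj[OF assms(2,3,1)] per_noninj[OF assms(2,3,1)] by blast
next
  assume h: "\<not> (\<exists>\<alpha> \<beta>. replaceable p m f \<alpha> \<beta>) \<and> \<not> (\<exists>\<alpha> \<beta>. periodic_pair p m f \<alpha> \<beta>)"
  show "inj_on (global_map f L R) (configs p)"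
    unfolding inj_on_def using noninj_pairs[OF assms(2,3)] h by blast
qed

end
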